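(* Let $d\ge2$, $n\ge1$, $p\ge1$, $k\in\{1,\ldots,n\}$, and let $I=(i_1,\ldots,i_n)$ be an admissible multi-index. There exists a polynomial $Q_{k,I}(z_1,\ldots,z_n)$ such that for every periodic point $\mathbf w_0=(w_1,\ldots,w_n)$ of $F_0$ of period $p$ with $w_j\ne0$ for all $j$, $$\partial_{k,I}\rho_{k,\mathbf w_0}(F_0)=w_k^{-d^{p-1}}Q_{k,I}(\mathbf w_0),$$ and $\deg_{z_j}Q_{k,I}=i_jd^{p-1}$ for $j\ne k$, while $\deg_{z_k}Q_{k,I}=(i_k+1)d^{p-1}-1$ if $0\le i_k\le d-2$ and $\deg_{z_k}Q_{k,I}=d^{p-1}-1$ if $i_k=d-1$. Furthermore, if $p\ge2$, then for any two distinct admissible multi-indices $I$ and $I'$, the polynomials $Q_{k,I}$ and $Q_{k,I'}$ do not contain monomials that are proportional to each other.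
   Context: $F_0(z_1,\ldots,z_n)=(z_1^d,\ldots,z_n^d)$. A multi-index $I=(i_1,\ldots,i_n)\in\mathbb{Z}_{\ge0}^n$ with $i_1+\cdots+i_n\le d$ is admissible if $I\ne(0,\ldots,0)$ and $i_j\ne d$ for all $j$. For $G$ near $F_0$, $\mathbf w(G)$ is the analytic continuation of the period-$p$ point $\mathbf w_0$ and $\rho_{k,\mathbf w_0}(G)$ is the $k$-th diagonal entry of $DG^p$ at $\mathbf w(G)$. With $P_{k,I}(\mathbf z)=z_1^{i_1}\cdots z_n^{i_n}\mathbf e_k$ ($\mathbf e_k$ the $k$-th unit vector), $\partial_{k,I}\rho_{k,\mathbf w_0}(G)=\frac{d}{dt}\big|_{t=0}\rho_{k,\mathbf w_0}(G+tP_{k,I})$. *)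

theory Defs
  imports "HOL-Analysis.Analysis"
begin

text \<open>Points of C^n are elements of complex^'n (the finite index type 'n has n elements).
A polynomial in z_1..z_n is represented by its coefficient function
(exponent vector => coefficient) with finite support.\<close>

definition is_mpoly :: "(('n::finite \<Rightarrow> nat) \<Rightarrow> complex) \<Rightarrow> bool" where
  "is_mpoly Q \<longleftrightarrow> finite {m. Q m \<noteq> 0}"

definition mpoly_eval :: "(('n::finite \<Rightarrow> nat) \<Rightarrow> complex) \<Rightarrow> complex^'n \<Rightarrow> complex" where
  "mpoly_eval Q z = (\<Sum>m\<in>{m. Q m \<noteq> 0}. Q m * (\<Prod>j\<in>UNIV. (z $ j) ^ (m j)))"

text \<open>Degree in the variable z_j (the zero polynomial gets degree 0).\<close>
definition mpoly_deg_in :: "(('n::finite \<Rightarrow> nat) \<Rightarrow> complex) \<Rightarrow> 'n \<Rightarrow> nat" where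
  "mpoly_deg_in Q j = Max (insert 0 {m j | m. Q m \<noteq> 0})"

text \<open>Monomials of Q and Q' proportional to each other = same exponent, both coefficients nonzero.\<close>
definition no_proportional_monomials ::
  "(('n::finite \<Rightarrow> nat) \<Rightarrow> complex) \<Rightarrow> (('n \<Rightarrow> nat) \<Rightarrow> complex) \<Rightarrow> bool" where
  "no_proportional_monomials Q Q' \<longleftrightarrow> (\<forall>m. \<not> (Q m \<noteq> 0 \<and> Q' m \<noteq> 0))"

definition admissible :: "nat \<Rightarrow> ('n::finite \<Rightarrow> nat) \<Rightarrow> bool" where
  "admissible d I \<longleftrightarrow> (\<Sum>j\<in>UNIV. I j) \<le> d \<and> I \<noteq> (\<lambda>_. 0) \<and> (\<forall>j. I j \<noteq> d)"

definition F0 :: "nat \<Rightarrow> complex^'n \<Rightarrow> complex^'n" where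
  "F0 d z = (\<chi> j. (z $ j) ^ d)"

definition Pmon :: "'n \<Rightarrow> ('n::finite \<Rightarrow> nat) \<Rightarrow> complex^'n \<Rightarrow> complex^'n" where
  "Pmon k I z = (\<chi> i. if i = k then (\<Prod>j\<in>UNIV. (z $ j) ^ (I j)) else 0)"

definition periodic_point :: "('a \<Rightarrow> 'a) \<Rightarrow> nat \<Rightarrow> 'a \<Rightarrow> bool" where
  "periodic_point f p w \<longleftrightarrow> p \<ge> 1 \<and> (f ^^ p) w = w \<and> (\<forall>q. 0 < q \<and> q < p \<longrightarrow> (f ^^ q) w \<noteq> w)"

definition jac_diag :: "(complex^'n \<Rightarrow> complex^'n) \<Rightarrow> 'n \<Rightarrow> complex^'n \<Rightarrow> complex" where
  "jac_diag H k w = deriv (\<lambda>s. H (w + (\<chi> i. if i = k then s else 0)) $ k) 0"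

end

theory Submission
  imports Defs
begin


definition jet :: "(complex \<times> complex \<Rightarrow> complex) \<Rightarrow> complex \<times> complex \<Rightarrow> complex \<Rightarrow> complex \<Rightarrow> bool" where
  "jet f z0 a b \<longleftrightarrow> (\<exists>A B. (\<forall>z. f z = f z0 + (fst z - fst z0) * A z + (snd z - snd z0) * B z)
      \<and> isCont A z0 \<and> isCont B z0 \<and> A z0 = a \<and> B z0 = b)"

lemma jet_cong: "jet f z0 a b \<Longrightarrow> a = a' \<Longrightarrow> b = b' \<Longrightarrow> jet f z0 a' b'" by simp

lemma jet_const: "jet (\<lambda>z. c) z0 0 0"
  unfolding jet_def by (rule exI[of _ "\<lambda>_. 0"], rule exI[of _ "\<lambda>_. 0"]) simp

lemma jet_fst: "jet fst z0 1 0"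
  unfolding jet_def by (rule exI[of _ "\<lambda>_. 1"], rule exI[of _ "\<lambda>_. 0"]) simp

lemma jet_snd: "jet snd z0 0 1"
  unfolding jet_def by (rule exI[of _ "\<lambda>_. 0"], rule exI[of _ "\<lambda>_. 1"]) simp

lemma jet_isCont: assumes "jet f z0 a b" shows "isCont f z0"
proof -
  from assms obtain A B where eq: "\<forall>z. f z = f z0 + (fst z - fst z0) * A z + (snd z - snd z0) * B z"
    and c: "isCont A z0" "isCont B z0" unfolding jet_def by blast
  have "f = (\<lambda>z. f z0 + (fst z - fst z0) * A z + (snd z - snd z0) * B z)" using eq by auto
  moreover have "isCont (\<lambda>z. f z0 + (fst z - fst z0) * A z + (snd z - snd z0) * B z) z0"
    using c by (intro continuous_intros) auto
  ultimately show ?thesis by simp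
qed

lemma jet_add: assumes "jet f z0 a b" "jet g z0 a' b'"
  shows "jet (\<lambda>z. f z + g z) z0 (a + a') (b + b')"
proof -
  from assms(1) obtain A B where eq: "\<forall>z. f z = f z0 + (fst z - fst z0) * A z + (snd z - snd z0) * B z"
    and c: "isCont A z0" "isCont B z0" "A z0 = a" "B z0 = b" unfolding jet_def by blast
  from assms(2) obtain A' B' where eq': "\<forall>z. g z = g z0 + (fst z - fst z0) * A' z + (snd z - snd z0) * B' z"
    and c': "isCont A' z0" "isCont B' z0" "A' z0 = a'" "B' z0 = b'" unfolding jet_def by blast
  have "\<forall>z. f z + g z = (f z0 + g z0) + (fst z - fst z0) * (A z + A' z) + (snd z - snd z0) * (B z + B' z)"
  proof
    fix z show "f z + g z = (f z0 + g z0) + (fst z - fst z0) * (A z + A' z) + (snd z - snd z0) * (B z + B' z)"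
      by (rule trans[OF arg_cong2[where f="(+)", OF eq[rule_format, of z] eq'[rule_format, of z]]])
        (simp add: algebra_simps)
  qed
  note H = this
  show ?thesis unfolding jet_def
    apply (rule exI[of _ "\<lambda>z. A z + A' z"], rule exI[of _ "\<lambda>z. B z + B' z"])
    apply (intro conjI, rule H)
    using c c' by (auto intro!: continuous_intros)
qed

lemma jet_mult: assumes "jet f z0 a b" "jet g z0 a' b'"
  shows "jet (\<lambda>z. f z * g z) z0 (a * g z0 + f z0 * a') (b * g z0 + f z0 * b')"
proof -
  from assms(1) obtain A B where eq: "\<forall>z. f z = f z0 + (fst z - fst z0) * A z + (snd z - snd z0) * B z"
    and c: "isCont A z0" "isCont B z0" "A z0 = a" "B z0 = b" unfolding jet_def by blast
  from assms(2) obtain A' B' where eq': "\<forall>z. g z = g z0 + (fst z - fst z0) * A' z + (snd z - snd z0) * B' z"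
    and c': "isCont A' z0" "isCont B' z0" "A' z0 = a'" "B' z0 = b'" unfolding jet_def by blast
  have cg: "isCont g z0" using jet_isCont[OF assms(2)] .
  have "\<forall>z. f z * g z = f z0 * g z0 + (fst z - fst z0) * (A z * g z + f z0 * A' z)
           + (snd z - snd z0) * (B z * g z + f z0 * B' z)"
  proof
    fix z
    have "f z * g z = (f z0 + (fst z - fst z0) * A z + (snd z - snd z0) * B z) * g z" using eq[rule_format, of z] by simp
    also have "\<dots> = f z0 * g z + (fst z - fst z0) * A z * g z + (snd z - snd z0) * B z * g z"
      by (simp add: algebra_simps)
    also have "f z0 * g z = f z0 * (g z0 + (fst z - fst z0) * A' z + (snd z - snd z0) * B' z)"
      using eq'[rule_format, of z] by simp
    finally show "f z * g z = f z0 * g z0 + (fst z - fst z0) * (A z * g z + f z0 * A' z)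
           + (snd z - snd z0) * (B z * g z + f z0 * B' z)" by (simp add: algebra_simps)
  qed
  note H = this
  show ?thesis unfolding jet_def
    apply (rule exI[of _ "\<lambda>z. A z * g z + f z0 * A' z"], rule exI[of _ "\<lambda>z. B z * g z + f z0 * B' z"])
    apply (intro conjI, rule H)
    using c c' cg by (auto intro!: continuous_intros)
qed

lemma jet_power: assumes "jet f z0 a b"
  shows "jet (\<lambda>z. f z ^ n) z0 (of_nat n * f z0 ^ (n - 1) * a) (of_nat n * f z0 ^ (n - 1) * b)"
proof (induction n)
  case 0
  then show ?case using jet_const by simp
next
  case (Suc n)
  have "jet (\<lambda>z. f z * f z ^ n) z0 (a * f z0 ^ n + f z0 * (of_nat n * f z0 ^ (n - 1) * a))
         (b * f z0 ^ n + f z0 * (of_nat n * f z0 ^ (n - 1) * b))"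
    by (rule jet_mult[OF assms Suc])
  moreover have "f z0 * f z0 ^ (n - 1) * of_nat n = f z0 ^ n * of_nat n"
    by (cases n) auto
  moreover have "(\<lambda>z. f z ^ Suc n) = (\<lambda>z. f z * f z ^ n)" by simp
  ultimately show ?case
    by (auto elim!: jet_cong simp: algebra_simps)
qed

lemma jet_implicit:
  assumes JP: "jet P (0, w) aP bP" and JJ: "jet J (0, w) aJ bJ" and b1: "bP \<noteq> 1"
    and cx: "isCont x 0" and x0: "x 0 = w"
    and fix_ev: "eventually (\<lambda>t. P (t, x t) = x t) (nhds 0)"
  shows "((\<lambda>t. J (t, x t)) has_field_derivative (aJ + bJ * (aP / (1 - bP)))) (at 0)"
proof -
  from JP obtain A B where eq: "\<forall>z. P z = P (0,w) + (fst z - 0) * A z + (snd z - w) * B z"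
    and c: "isCont A (0,w)" "isCont B (0,w)" "A (0,w) = aP" "B (0,w) = bP" unfolding jet_def by auto
  from JJ obtain A' B' where eq': "\<forall>z. J z = J (0,w) + (fst z - 0) * A' z + (snd z - w) * B' z"
    and c': "isCont A' (0,w)" "isCont B' (0,w)" "A' (0,w) = aJ" "B' (0,w) = bJ" unfolding jet_def by auto
  have P0: "P (0, w) = w" using eventually_nhds_x_imp_x[OF fix_ev] x0 by simp
  have cxp: "isCont (\<lambda>t. (t, x t)) 0" using cx by (intro continuous_intros) auto
  have lim_pair: "((\<lambda>t. (t, x t)) \<longlongrightarrow> (0, w)) (at 0)"
    using cxp x0 unfolding isCont_def by simp
  have limA: "((\<lambda>t. A (t, x t)) \<longlongrightarrow> aP) (at 0)"
    using isCont_tendsto_compose[OF c(1) lim_pair] c(3) by simp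
  have limB: "((\<lambda>t. B (t, x t)) \<longlongrightarrow> bP) (at 0)"
    using isCont_tendsto_compose[OF c(2) lim_pair] c(4) by simp
  have limA': "((\<lambda>t. A' (t, x t)) \<longlongrightarrow> aJ) (at 0)"
    using isCont_tendsto_compose[OF c'(1) lim_pair] c'(3) by simp
  have limB': "((\<lambda>t. B' (t, x t)) \<longlongrightarrow> bJ) (at 0)"
    using isCont_tendsto_compose[OF c'(2) lim_pair] c'(4) by simp
  have evB: "eventually (\<lambda>t. B (t, x t) \<noteq> 1) (at 0)"
    using tendsto_imp_eventually_ne[OF limB b1] .
  have fix_at: "eventually (\<lambda>t. P (t, x t) = x t) (at 0)"
    using fix_ev by (simp add: eventually_at_filter eventually_mono)
  have ev_q: "eventually (\<lambda>t. (x t - x 0) / (t - 0) = A (t, x t) / (1 - B (t, x t))) (at 0)"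
    using evB fix_at eventually_at[of "\<lambda>t. t \<noteq> 0"]
  proof -
    have "eventually (\<lambda>t. t \<noteq> 0) (at (0::complex))" by (simp add: eventually_at_filter)
    with evB fix_at show ?thesis
    proof eventually_elim
      case (elim t)
      have "x t = w + t * A (t, x t) + (x t - w) * B (t, x t)"
        using elim(2) eq[rule_format, of "(t, x t)"] P0 by simp
      then have "(x t - w) * (1 - B (t, x t)) = t * A (t, x t)" by (simp add: algebra_simps)
      then show ?case using elim(1,3) x0
        by (simp add: field_simps)
    qed
  qed
  have limq: "((\<lambda>t. (x t - x 0) / (t - 0)) \<longlongrightarrow> aP / (1 - bP)) (at 0)"
    apply (rule Lim_transform_eventually[OF _ ev_q[THEN eventually_mono]])
     apply (rule tendsto_divide[OF limA tendsto_diff[OF tendsto_const limB]])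
    using b1 by auto
  have ev_r: "eventually (\<lambda>t. (J (t, x t) - J (0, x 0)) / (t - 0) =
       A' (t, x t) + ((x t - x 0) / (t - 0)) * B' (t, x t)) (at 0)"
  proof -
    have "eventually (\<lambda>t. t \<noteq> 0) (at (0::complex))" by (simp add: eventually_at_filter)
    then show ?thesis
    proof eventually_elim
      case (elim t)
      have "J (t, x t) = J (0, w) + t * A' (t, x t) + (x t - w) * B' (t, x t)"
        using eq'[rule_format, of "(t, x t)"] by simp
      then show ?case using elim x0 by (simp add: field_simps)
    qed
  qed
  have "((\<lambda>t. (J (t, x t) - J (0, x 0)) / (t - 0)) \<longlongrightarrow> aJ + aP / (1 - bP) * bJ) (at 0)"
    apply (rule Lim_transform_eventually[OF _ ev_r[THEN eventually_mono]])
     apply (rule tendsto_add[OF limA' tendsto_mult[OF limq limB']])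
    by auto
  then show ?thesis
    by (simp add: has_field_derivative_iff algebra_simps)
qed



fun Phi :: "nat \<Rightarrow> nat \<Rightarrow> (nat \<Rightarrow> complex) \<Rightarrow> nat \<Rightarrow> complex \<times> complex \<Rightarrow> complex" where
  "Phi d ik u 0 z = snd z"
| "Phi d ik u (Suc m) z = Phi d ik u m z ^ d + fst z * (Phi d ik u m z ^ ik * u m)"

fun Jac :: "nat \<Rightarrow> nat \<Rightarrow> (nat \<Rightarrow> complex) \<Rightarrow> nat \<Rightarrow> complex \<times> complex \<Rightarrow> complex" where
  "Jac d ik u 0 z = 1"
| "Jac d ik u (Suc m) z = (of_nat d * Phi d ik u m z ^ (d - 1)
      + fst z * (of_nat ik * Phi d ik u m z ^ (ik - 1) * u m)) * Jac d ik u m z"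

lemma Phi_deriv: "((\<lambda>y. Phi d ik u m (t, y)) has_field_derivative Jac d ik u m (t, x)) (at x)"
proof (induction m)
  case 0
  then show ?case by (auto intro!: derivative_eq_intros)
next
  case (Suc m)
  show ?case
    by (auto intro!: derivative_eq_intros Suc simp: algebra_simps)
qed

lemma Phi_zero: "Phi d ik u m (0, x) = x ^ (d ^ m)"
  by (induction m) (auto simp: power_mult[symmetric] mult.commute)

definition Wp :: "complex \<Rightarrow> nat \<Rightarrow> nat \<Rightarrow> complex" where
  "Wp w d m = w ^ (d ^ m)"

lemma Wp_Suc: "Wp w d (Suc m) = Wp w d m ^ d"
  unfolding Wp_def by (simp add: power_mult[symmetric] mult.commute)

lemma Wp_nz: "w \<noteq> 0 \<Longrightarrow> Wp w d m \<noteq> 0" unfolding Wp_def by simp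

lemma pow_m1: "(v::complex) \<noteq> 0 \<Longrightarrow> n \<ge> 1 \<Longrightarrow> v ^ (n - 1) = v ^ n / v"
  by (cases n) auto

lemma pow_m2: "(v::complex) \<noteq> 0 \<Longrightarrow> n \<ge> 2 \<Longrightarrow> v ^ (n - 2) = v ^ n / v ^ 2"
proof -
  assume a: "v \<noteq> 0" "n \<ge> 2"
  then obtain k where "n = k + 2" by (metis le_add_diff_inverse2)
  then show ?thesis using a by (simp add: power_add power2_eq_square)
qed

lemma pow_m1': "(v::complex) \<noteq> 0 \<Longrightarrow> of_nat n * v ^ (n - 1) = of_nat n * v ^ n / v"
  by (cases n) auto

lemma pow_m1s: "n \<ge> 1 \<Longrightarrow> (v::complex) * v ^ (n - Suc 0) = v ^ n"
  by (cases n) auto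

definition aPc :: "nat \<Rightarrow> nat \<Rightarrow> (nat \<Rightarrow> complex) \<Rightarrow> complex \<Rightarrow> nat \<Rightarrow> complex" where
  "aPc d ik u w m = (\<Sum>l<m. of_nat d ^ m / of_nat d ^ Suc l * (Wp w d m / Wp w d (Suc l))
       * (Wp w d l ^ ik * u l))"

definition aJc :: "nat \<Rightarrow> nat \<Rightarrow> (nat \<Rightarrow> complex) \<Rightarrow> complex \<Rightarrow> nat \<Rightarrow> complex" where
  "aJc d ik u w m = (\<Sum>l<m. of_nat d ^ m / of_nat d ^ Suc l
       * (of_nat d ^ m - of_nat d ^ Suc l + of_nat d ^ l * of_nat ik)
       * (Wp w d m / Wp w d (Suc l)) * (Wp w d l ^ ik * u l)) / w"

lemma aPc_Suc:
  assumes "w \<noteq> 0" "d \<ge> 2"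
  shows "aPc d ik u w (Suc m) = of_nat d * (Wp w d m ^ d / Wp w d m) * aPc d ik u w m
           + Wp w d m ^ ik * u m"
proof -
  have dnz: "(of_nat d :: complex) \<noteq> 0" using assms by simp
  have nz: "\<And>l. Wp w d l \<noteq> 0" using Wp_nz assms by auto
  show ?thesis
    unfolding aPc_def sum.lessThan_Suc sum_distrib_left
    apply (rule arg_cong2[where f="(+)"])
     apply (rule sum.cong, simp)
    using dnz nz by (simp_all add: Wp_Suc field_simps)
qed

lemma jet_Phi:
  assumes "w \<noteq> 0" "d \<ge> 2"
  shows "jet (Phi d ik u m) (0, w) (aPc d ik u w m) (of_nat d ^ m * Wp w d m / w)"
proof (induction m)
  case 0
  show ?case using jet_snd[of "(0,w)"] assms by (simp add: aPc_def Wp_def fun_eq_iff)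
next
  case (Suc m)
  have nz: "\<And>l. Wp w d l \<noteq> 0" using Wp_nz assms by auto
  have P0: "Phi d ik u m (0, w) = Wp w d m" by (simp add: Phi_zero Wp_def)
  have feq: "Phi d ik u (Suc m) = (\<lambda>z. Phi d ik u m z ^ d + fst z * (Phi d ik u m z ^ ik * u m))"
    by (rule ext) simp
  note J = jet_add[OF jet_power[OF Suc] jet_mult[OF jet_fst jet_mult[OF jet_power[OF Suc] jet_const]]]
  show ?case unfolding feq
    apply (rule jet_cong[OF J])
    using assms nz by (simp_all add: P0 aPc_Suc pow_m1 Wp_Suc field_simps pow_m1s)
qed

lemma pow_m2s: "n \<ge> 2 \<Longrightarrow> (v::complex) \<noteq> 0 \<Longrightarrow> v ^ (n - Suc 0 - Suc 0) = v ^ n / v ^ 2"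
proof -
  assume a: "n \<ge> 2" "v \<noteq> 0"
  have "n - Suc 0 - Suc 0 = n - 2" by arith
  then show ?thesis using pow_m2[of v n] a by simp
qed

lemma pow_m2c: "n \<ge> 2 \<Longrightarrow> (v::complex) \<noteq> 0 \<Longrightarrow> v ^ (n - Suc (Suc 0)) = v ^ n / v ^ 2"
  using pow_m2[of v n] by (simp add: numeral_2_eq_2)

lemma pow_or: "(v::complex) * v ^ (n - Suc 0) = (if n = 0 then v else v ^ n)"
  by (cases n) auto

lemma pow_m1b: "(v::complex) \<noteq> 0 \<Longrightarrow> n \<ge> 1 \<Longrightarrow> v ^ (n - Suc 0) = v ^ n / v"
  by (cases n) auto

lemma Phi_zero_W: "Phi d ik u m (0, w) = Wp w d m"
  by (simp add: Phi_zero Wp_def)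

lemma Jac_zero0: assumes "w \<noteq> 0" "d \<ge> 2"
  shows "Jac d ik u m (0, w) = of_nat d ^ m * Wp w d m / w"
proof (induction m)
  case 0 then show ?case using assms by (simp add: Wp_def)
next
  case (Suc m)
  have nz: "\<And>l. Wp w d l \<noteq> 0" using Wp_nz assms by auto
  show ?case using Suc assms nz by (simp add: Phi_zero_W Wp_Suc pow_m1 field_simps pow_m1b)
qed

lemma aJc_Suc:
  assumes "w \<noteq> 0" "d \<ge> 2"
  shows "aJc d ik u w (Suc m) =
     of_nat d * (of_nat d - 1) * (Wp w d m ^ d / Wp w d m ^ 2) * aPc d ik u w m * (of_nat d ^ m * Wp w d m / w)
     + of_nat ik * (Wp w d m ^ ik / Wp w d m) * u m * (of_nat d ^ m * Wp w d m / w)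
     + of_nat d * (Wp w d m ^ d / Wp w d m) * aJc d ik u w m"
proof -
  have dnz: "(of_nat d :: complex) \<noteq> 0" using assms by simp
  have nz: "\<And>l. Wp w d l \<noteq> 0" using Wp_nz assms by auto
  define A where "A = of_nat d * (of_nat d - 1) * (Wp w d m ^ d / Wp w d m ^ 2) * (of_nat d ^ m * Wp w d m / w)"
  define C where "C = of_nat d * (Wp w d m ^ d / Wp w d m)"
  define g where "g = (\<lambda>l. of_nat d ^ m / of_nat d ^ Suc l * (Wp w d m / Wp w d (Suc l))
       * (Wp w d l ^ ik * u l))"
  define h where "h = (\<lambda>l. of_nat d ^ m / of_nat d ^ Suc l
       * (of_nat d ^ m - of_nat d ^ Suc l + of_nat d ^ l * of_nat ik)
       * (Wp w d m / Wp w d (Suc l)) * (Wp w d l ^ ik * u l))"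
  define f where "f = (\<lambda>l. of_nat d ^ Suc m / of_nat d ^ Suc l
       * (of_nat d ^ Suc m - of_nat d ^ Suc l + of_nat d ^ l * of_nat ik)
       * (Wp w d (Suc m) / Wp w d (Suc l)) * (Wp w d l ^ ik * u l))"
  define B where "B = of_nat ik * (Wp w d m ^ ik / Wp w d m) * u m * (of_nat d ^ m * Wp w d m / w)"
  have 1: "(\<Sum>l<Suc m. f l) = (\<Sum>l<m. w * A * g l + C * h l) + w * B"
    unfolding sum.lessThan_Suc
  proof (rule arg_cong2[where f="(+)"])
    show "sum f {..<m} = (\<Sum>l<m. w * A * g l + C * h l)"
    proof (rule sum.cong, simp)
      fix l assume "l \<in> {..<m}"
      show "f l = w * A * g l + C * h l"
        unfolding f_def g_def h_def A_def C_def using dnz nz assms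
        by (simp add: Wp_Suc field_simps) (simp add: algebra_simps eval_nat_numeral)
    qed
    show "f m = w * B" unfolding f_def B_def using dnz nz assms
      by (simp add: Wp_Suc field_simps)
  qed
  have "aJc d ik u w (Suc m) = (\<Sum>l<Suc m. f l) / w" unfolding aJc_def f_def ..
  also have "\<dots> = A * (\<Sum>l<m. g l) + B + C * ((\<Sum>l<m. h l) / w)"
    unfolding 1 using assms by (simp add: sum.distrib sum_distrib_left field_simps)
  finally show ?thesis unfolding A_def B_def C_def g_def h_def aPc_def aJc_def
    by (simp add: algebra_simps)
qed

lemma jet_Jac:
  assumes "w \<noteq> 0" "d \<ge> 2"
  shows "jet (Jac d ik u m) (0, w) (aJc d ik u w m)
     (of_nat d ^ m * (of_nat d ^ m - 1) * Wp w d m / w ^ 2)"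
proof (induction m)
  case 0
  show ?case using jet_const[of 1 "(0,w)"] assms by (simp add: aJc_def fun_eq_iff)
next
  case (Suc m)
  have nz: "\<And>l. Wp w d l \<noteq> 0" using Wp_nz assms by auto
  have P0: "Phi d ik u m (0, w) = Wp w d m" by (simp add: Phi_zero Wp_def)
  have feq: "Jac d ik u (Suc m) = (\<lambda>z. (of_nat d * Phi d ik u m z ^ (d - 1)
      + fst z * (of_nat ik * Phi d ik u m z ^ (ik - 1) * u m)) * Jac d ik u m z)"
    by (rule ext) simp
  note JP = jet_Phi[OF assms, of ik u m]
  note J = jet_mult[OF jet_add[OF jet_mult[OF jet_const jet_power[OF JP]]
      jet_mult[OF jet_fst jet_mult[OF jet_mult[OF jet_const jet_power[OF JP]] jet_const]]] Suc]
  have dm1: "(of_nat (d - 1) :: complex) = of_nat d - 1" using assms by (simp add: of_nat_diff)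
  show ?case unfolding feq
    apply (rule jet_cong[OF J])
    using assms nz
    by (simp_all add: P0 aJc_Suc Jac_zero0 pow_m1b pow_m2s pow_m1' pow_m2c Wp_Suc dm1 field_simps pow_or) (simp_all add: algebra_simps eval_nat_numeral)
qed



lemma final_value:
  assumes w: "w \<noteq> 0" and d: "d \<ge> 2" and p: "p \<ge> 1" and per: "Wp w d p = w"
  shows "of_nat d ^ p * Wp w d p / w \<noteq> 1"
    and "aJc d ik u w p + of_nat d ^ p * (of_nat d ^ p - 1) * Wp w d p / w ^ 2
           * (aPc d ik u w p / (1 - of_nat d ^ p * Wp w d p / w))
         = of_nat d ^ (p - 1) * (of_nat ik - of_nat d) * (\<Sum>l<p. Wp w d l ^ ik * u l / Wp w d (Suc l))"
proof -
  have dp: "(of_nat d ^ p :: complex) \<noteq> 1"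
  proof
    assume "(of_nat d ^ p :: complex) = 1"
    then have "of_nat (d ^ p) = (1::complex)" by simp
    then have "d ^ p = 1" by (simp only: of_nat_eq_1_iff)
    moreover have "d \<le> d ^ p" using p d by (simp add: self_le_power)
    ultimately show False using d by simp
  qed
  then show "of_nat d ^ p * Wp w d p / w \<noteq> 1" using per w by simp
  have dnz: "(of_nat d :: complex) \<noteq> 0" using d by simp
  have nz: "\<And>l. Wp w d l \<noteq> 0" using Wp_nz w by auto
  have dp1: "(of_nat d :: complex) ^ p = of_nat d * of_nat d ^ (p - 1)"
    using p by (metis One_nat_def Suc_pred less_eq_Suc_le power_Suc)
  have 1: "1 - of_nat d ^ p * Wp w d p / w = 1 - of_nat d ^ p" using per w by simp
  have 2: "of_nat d ^ p * (of_nat d ^ p - 1) * Wp w d p / w ^ 2 = of_nat d ^ p * (of_nat d ^ p - 1) / w"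
    using per w by (simp add: power2_eq_square)
  have 3: "of_nat d ^ p * (of_nat d ^ p - 1) / w * (aPc d ik u w p / (1 - of_nat d ^ p))
       = - (of_nat d ^ p * aPc d ik u w p / w)"
  proof -
    have "1 - of_nat d ^ p \<noteq> (0::complex)" using dp by simp
    then show ?thesis using w by (simp add: field_simps)
  qed
  have "aJc d ik u w p - of_nat d ^ p * aPc d ik u w p / w
      = (\<Sum>l<p. of_nat d ^ p / of_nat d ^ Suc l
       * (of_nat d ^ p - of_nat d ^ Suc l + of_nat d ^ l * of_nat ik)
       * (Wp w d p / Wp w d (Suc l)) * (Wp w d l ^ ik * u l)
       - of_nat d ^ p * (of_nat d ^ p / of_nat d ^ Suc l * (Wp w d p / Wp w d (Suc l))
       * (Wp w d l ^ ik * u l))) / w"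
    unfolding aJc_def aPc_def using w by (simp add: sum_subtractf sum_distrib_left diff_divide_distrib)
  also have "\<dots> = (\<Sum>l<p. of_nat d ^ (p - 1) * (of_nat ik - of_nat d) * (Wp w d l ^ ik * u l / Wp w d (Suc l)))"
    unfolding sum_divide_distrib
  proof (rule sum.cong, simp)
    fix l assume "l \<in> {..<p}"
    show "(of_nat d ^ p / of_nat d ^ Suc l * (of_nat d ^ p - of_nat d ^ Suc l + of_nat d ^ l * of_nat ik) *
          (Wp w d p / Wp w d (Suc l)) * (Wp w d l ^ ik * u l) -
          of_nat d ^ p * (of_nat d ^ p / of_nat d ^ Suc l * (Wp w d p / Wp w d (Suc l)) * (Wp w d l ^ ik * u l))) / w =
         of_nat d ^ (p - 1) * (of_nat ik - of_nat d) * (Wp w d l ^ ik * u l / Wp w d (Suc l))"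
      using dnz nz w per unfolding dp1 by (simp add: field_simps)
  qed
  finally show "aJc d ik u w p + of_nat d ^ p * (of_nat d ^ p - 1) * Wp w d p / w ^ 2
           * (aPc d ik u w p / (1 - of_nat d ^ p * Wp w d p / w))
         = of_nat d ^ (p - 1) * (of_nat ik - of_nat d) * (\<Sum>l<p. Wp w d l ^ ik * u l / Wp w d (Suc l))"
    unfolding 1 2 3 by (simp add: sum_distrib_left)
qed

lemma root_iso:
  fixes f :: "complex \<Rightarrow> complex"
  assumes cf: "isCont f 0" and f0: "f 0 = y" and y: "y \<noteq> 0" and yD: "y ^ D = y" and D: "D \<ge> 2"
    and ev: "eventually (\<lambda>t. f t ^ D = f t) (nhds 0)"
  shows "eventually (\<lambda>t. f t = y) (nhds 0)"
proof -
  define N where "N = D - 1"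
  have N1: "N \<ge> 1" and DN: "D = Suc N" using D unfolding N_def by auto
  have yN: "y ^ N = 1" using yD y unfolding DN by simp
  define S where "S = (\<lambda>x. \<Sum>i<N. y ^ (N - Suc i) * x ^ i)"
  have Sy: "S y = of_nat N * y ^ (N - 1)"
    unfolding S_def
  proof -
    have "(\<Sum>i<N. y ^ (N - Suc i) * y ^ i) = (\<Sum>i<N. y ^ (N - 1))"
    proof (rule sum.cong, simp)
      fix i assume "i \<in> {..<N}"
      then have "N - Suc i + i = N - 1" by auto
      then show "y ^ (N - Suc i) * y ^ i = y ^ (N - 1)" by (metis power_add)
    qed
    then show "(\<Sum>i<N. y ^ (N - Suc i) * y ^ i) = of_nat N * y ^ (N - 1)" by simp
  qed
  have Snz: "S y \<noteq> 0" using Sy N1 y by simp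
  have limf: "(f \<longlongrightarrow> y) (nhds 0)" using cf f0 tendsto_at_iff_tendsto_nhds[of f 0] unfolding isCont_def by simp
  have cS: "isCont S y" unfolding S_def by (intro continuous_intros)
  have limS: "((\<lambda>t. S (f t)) \<longlongrightarrow> S y) (nhds 0)"
    using isCont_tendsto_compose[OF cS limf] .
  have e1: "eventually (\<lambda>t. f t \<noteq> 0) (nhds 0)" using tendsto_imp_eventually_ne[OF limf y] .
  have e2: "eventually (\<lambda>t. S (f t) \<noteq> 0) (nhds 0)" using tendsto_imp_eventually_ne[OF limS Snz] .
  from e1 e2 ev show ?thesis
  proof eventually_elim
    case (elim t)
    have "f t ^ N = 1" using elim(1,3) unfolding DN by simp
    then have "f t ^ N - y ^ N = 0" using yN by simp
    then have "(f t - y) * S (f t) = 0" unfolding S_def power_diff_sumr2 .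
    then show ?case using elim(2) by simp
  qed
qed



definition ak :: "nat \<Rightarrow> nat \<Rightarrow> nat \<Rightarrow> nat \<Rightarrow> nat" where
  "ak d p i l = (if l < p - 1 then d ^ (p - 1) + d ^ l * i - d ^ Suc l
     else if i = d - 1 then 0 else (i + 1) * d ^ (p - 1) - 1)"

definition mon :: "nat \<Rightarrow> nat \<Rightarrow> 'n \<Rightarrow> ('n \<Rightarrow> nat) \<Rightarrow> nat \<Rightarrow> ('n \<Rightarrow> nat)" where
  "mon d p k I l = (\<lambda>j. if j = k then ak d p (I k) l else d ^ l * I j)"

definition Qc :: "nat \<Rightarrow> nat \<Rightarrow> 'n \<Rightarrow> ('n \<Rightarrow> nat) \<Rightarrow> ('n \<Rightarrow> nat) \<Rightarrow> complex" where
  "Qc d p k I e = (if e \<in> mon d p k I ` {..<p} then of_nat d ^ (p - 1) * (of_nat (I k) - of_nat d) else 0)"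

lemma adm_le: assumes "admissible d (I :: 'n::finite \<Rightarrow> nat)" shows "I j \<le> d - 1"
proof -
  have "I j \<le> (\<Sum>j\<in>UNIV. I j)" by (rule member_le_sum) auto
  then have "I j \<le> d" using assms unfolding admissible_def by simp
  moreover have "I j \<noteq> d" using assms unfolding admissible_def by simp
  ultimately show ?thesis by simp
qed

lemma adm_nz: assumes "admissible d (I :: 'n::finite \<Rightarrow> nat)" shows "\<exists>j. I j \<noteq> 0"
  using assms unfolding admissible_def by auto

lemma ka: assumes "(d::nat) \<ge> 2" "l < l'" "d ^ l * x = d ^ l' * y" "x < d" shows "x = 0 \<and> y = 0"
proof -
  have "d ^ l' = d ^ l * d ^ (l' - l)" using assms(2) by (simp flip: power_add)
  then have "x = d ^ (l' - l) * y" using assms(1,3) by simp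
  moreover have "d ^ (l' - l) \<ge> d" using assms(1,2) by (simp add: self_le_power)
  ultimately show ?thesis using assms(4)
    by (metis mult_0_right mult_le_cancel1 nat_mult_1_right not_less order_le_less_trans less_one not_gr0 le_trans mult_le_mono2)
qed

lemma pow_mono_lt: assumes "(d::nat) \<ge> 2" "a \<le> b" shows "d ^ a \<le> d ^ b"
  using assms by (simp add: power_increasing)

lemma ak_lt: assumes "l < p - 1" "i \<le> d" "d \<ge> 2"
  shows "ak d p i l + d ^ l * (d - i) = d ^ (p - 1)"
proof -
  have "d ^ Suc l \<le> d ^ (p - 1)" using assms by (intro pow_mono_lt) auto
  moreover have "d ^ Suc l = d ^ l * i + d ^ l * (d - i)" using assms(2)
    by (simp flip: add_mult_distrib2)
  ultimately show ?thesis using assms(1) unfolding ak_def by simp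
qed

lemma ak_range: assumes "d \<ge> 2" "1 \<le> i" "i \<le> d - 1" "l < p"
  shows "l < p - 1 \<longleftrightarrow> 1 \<le> ak d p i l \<and> ak d p i l < d ^ (p - 1)"
proof (cases "l < p - 1")
  case True
  have e: "ak d p i l + d ^ l * (d - i) = d ^ (p - 1)" using ak_lt[OF True _ assms(1)] assms by simp
  have "d ^ l * (d - i) \<ge> 1" using assms by simp
  moreover have "d ^ l * (d - i) < d ^ (p - 1)"
  proof -
    have "d ^ l * (d - i) < d ^ l * d" using assms by simp
    also have "\<dots> = d ^ Suc l" by simp
    also have "\<dots> \<le> d ^ (p - 1)" using True assms by (intro pow_mono_lt) auto
    finally show ?thesis .
  qed
  ultimately show ?thesis using True e by linarith
next
  case False
  have "d ^ (p - 1) \<ge> 1" using assms by simp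
  moreover have "i * d ^ (p - 1) \<ge> d ^ (p - 1)" using assms(2) by simp
  moreover have "(i + 1) * d ^ (p - 1) = i * d ^ (p - 1) + d ^ (p - 1)" by simp
  ultimately have "(i + 1) * d ^ (p - 1) - 1 \<ge> d ^ (p - 1)" by linarith
  then have "ak d p i l = 0 \<or> ak d p i l \<ge> d ^ (p - 1)"
    using False unfolding ak_def by auto
  then show ?thesis using False by auto
qed

lemma mon_eq:
  fixes I I' :: "'n::finite \<Rightarrow> nat"
  assumes d: "d \<ge> 2" and p: "p \<ge> 2" and aI: "admissible d I" and aI': "admissible d I'"
    and l: "l < p" and l': "l' < p" and eq: "mon d p k I l = mon d p k I' l'"
  shows "l = l' \<and> I = I'"
proof -
  have o: "\<And>j. j \<noteq> k \<Longrightarrow> d ^ l * I j = d ^ l' * I' j"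
    using eq unfolding mon_def by (metis (full_types))
  have a: "ak d p (I k) l = ak d p (I' k) l'"
    using fun_cong[OF eq, of k] unfolding mon_def by simp
  have le: "\<And>j. I j \<le> d - 1" "\<And>j. I' j \<le> d - 1" using adm_le aI aI' by auto
  have ll: "l = l'"
  proof (rule ccontr)
    assume ne: "l \<noteq> l'"
    have z: "I j = 0 \<and> I' j = 0" if "j \<noteq> k" for j
    proof (cases "l < l'")
      case True
      show ?thesis using ka[OF d True o[OF that]] le[of j] d by simp
    next
      case False
      then have "l' < l" using ne by simp
      then show ?thesis using ka[OF d _ o[OF that, symmetric]] le[of j] d by simp
    qed
    have ik: "I k \<ge> 1" using adm_nz[OF aI] z by (metis less_one not_le)
    have ik': "I' k \<ge> 1" using adm_nz[OF aI'] z by (metis less_one not_le)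
    have r1: "l < p - 1 \<longleftrightarrow> l' < p - 1"
      using ak_range[OF d ik le(1) l] ak_range[OF d ik' le(2) l'] a by simp
    have both: "l < p - 1 \<and> l' < p - 1" using r1 l l' ne by auto
    have "ak d p (I k) l + d ^ l * (d - I k) = ak d p (I' k) l' + d ^ l' * (d - I' k)"
      using ak_lt[of l p "I k" d] ak_lt[of l' p "I' k" d] both le(1)[of k] le(2)[of k] d by simp
    then have e2: "d ^ l * (d - I k) = d ^ l' * (d - I' k)" using a by simp
    show False
    proof (cases "l < l'")
      case True
      have "d - I k = 0" using ka[OF d True e2] ik le(1)[of k] d by simp
      then show False using le(1)[of k] d by linarith
    next
      case False
      then have "l' < l" using ne by simp
      have "d - I' k = 0" using ka[OF d \<open>l' < l\<close> e2[symmetric]] ik' le(2)[of k] d by simp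
      then show False using le(2)[of k] d by linarith
    qed
  qed
  have oj: "I j = I' j" if "j \<noteq> k" for j using o[OF that] ll d by simp
  have kk: "I k = I' k"
  proof (cases "l < p - 1")
    case True
    have "ak d p (I k) l + d ^ l * (d - I k) = ak d p (I' k) l + d ^ l * (d - I' k)"
      using ak_lt[of l p "I k" d] ak_lt[of l p "I' k" d] True le(1)[of k] le(2)[of k] d by simp
    then have "d - I k = d - I' k" using a ll d by simp
    then show ?thesis using le(1)[of k] le(2)[of k] d by simp
  next
    case False
    have "d ^ 1 \<le> d ^ (p - 1)" using d p by (intro pow_mono_lt) auto
    then have D2: "d ^ (p - 1) \<ge> 2" using d by simp
    have v: "ak d p i l = (if i = d - 1 then 0 else (i + 1) * d ^ (p - 1) - 1)" for i
      using False unfolding ak_def by simp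
    have pos: "(i + 1) * d ^ (p - 1) - 1 \<ge> 1" for i
    proof -
      have "(i + 1) * d ^ (p - 1) \<ge> d ^ (p - 1)" by simp
      then show ?thesis using D2 by linarith
    qed
    show ?thesis
    proof (cases "I k = d - 1"; cases "I' k = d - 1")
      assume "I k \<noteq> d - 1" "I' k \<noteq> d - 1"
      then have "(I k + 1) * d ^ (p - 1) - 1 = (I' k + 1) * d ^ (p - 1) - 1" using a ll v by simp
      moreover have "(I k + 1) * d ^ (p - 1) \<ge> 1" "(I' k + 1) * d ^ (p - 1) \<ge> 1" using D2 by simp_all
      ultimately have "(I k + 1) * d ^ (p - 1) = (I' k + 1) * d ^ (p - 1)" by linarith
      then show ?thesis using D2 d by simp
    qed (use a ll v pos[of "I k"] pos[of "I' k"] in \<open>auto\<close>)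
  qed
  have "I = I'" using oj kk by (metis ext)
  then show ?thesis using ll by simp
qed

lemma mon_inj:
  fixes I :: "'n::finite \<Rightarrow> nat"
  assumes d: "d \<ge> 2" and p: "p \<ge> 1" and aI: "admissible d I"
  shows "inj_on (mon d p k I) {..<p}"
proof (cases "p = 1")
  case True then show ?thesis by (auto simp: inj_on_def)
next
  case False
  then have "p \<ge> 2" using p by simp
  then show ?thesis unfolding inj_on_def using mon_eq[OF d _ aI aI] by blast
qed

lemma coef_nz:
  fixes I :: "'n::finite \<Rightarrow> nat"
  assumes d: "d \<ge> 2" and aI: "admissible d I"
  shows "(of_nat d ^ (p - 1) * (of_nat (I k) - of_nat d) :: complex) \<noteq> 0"
proof -
  have "I k \<noteq> d" using aI unfolding admissible_def by simp
  then have "(of_nat (I k) :: complex) \<noteq> of_nat d" by simp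
  then show ?thesis using d by simp
qed

lemma Qc_supp:
  fixes I :: "'n::finite \<Rightarrow> nat"
  assumes d: "d \<ge> 2" and aI: "admissible d I"
  shows "{e. Qc d p k I e \<noteq> 0} = mon d p k I ` {..<p}"
  using coef_nz[OF d aI, of p k] unfolding Qc_def by auto

lemma Qc_mpoly:
  fixes I :: "'n::finite \<Rightarrow> nat"
  assumes d: "d \<ge> 2" and aI: "admissible d I"
  shows "is_mpoly (Qc d p k I)"
  unfolding is_mpoly_def Qc_supp[OF d aI] by simp

lemma Qc_eval:
  fixes I :: "'n::finite \<Rightarrow> nat"
  assumes d: "d \<ge> 2" and p: "p \<ge> 1" and aI: "admissible d I"
  shows "mpoly_eval (Qc d p k I) z = of_nat d ^ (p - 1) * (of_nat (I k) - of_nat d)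
     * (\<Sum>l<p. \<Prod>j\<in>UNIV. (z $ j) ^ (mon d p k I l j))"
proof -
  have "mpoly_eval (Qc d p k I) z = (\<Sum>e\<in>mon d p k I ` {..<p}. Qc d p k I e * (\<Prod>j\<in>UNIV. (z $ j) ^ (e j)))"
    unfolding mpoly_eval_def Qc_supp[OF d aI] ..
  also have "\<dots> = (\<Sum>l<p. Qc d p k I (mon d p k I l) * (\<Prod>j\<in>UNIV. (z $ j) ^ (mon d p k I l j)))"
    by (subst sum.reindex[OF mon_inj[OF d p aI]]) simp
  also have "\<dots> = (\<Sum>l<p. of_nat d ^ (p - 1) * (of_nat (I k) - of_nat d) * (\<Prod>j\<in>UNIV. (z $ j) ^ (mon d p k I l j)))"
    by (rule sum.cong) (auto simp: Qc_def)
  finally show ?thesis by (simp add: sum_distrib_left)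
qed

lemma Qc_deg:
  fixes I :: "'n::finite \<Rightarrow> nat"
  assumes d: "d \<ge> 2" and aI: "admissible d I"
  shows "mpoly_deg_in (Qc d p k I) j = Max (insert 0 ((\<lambda>l. mon d p k I l j) ` {..<p}))"
proof -
  have e: "\<And>m. Qc d p k I m \<noteq> 0 \<longleftrightarrow> m \<in> mon d p k I ` {..<p}"
    using Qc_supp[OF d aI, of p k] by blast
  have "{m j |m. Qc d p k I m \<noteq> 0} = (\<lambda>l. mon d p k I l j) ` {..<p}"
    unfolding e by auto
  then show ?thesis unfolding mpoly_deg_in_def by simp
qed

lemma deg_other:
  fixes I :: "'n::finite \<Rightarrow> nat"
  assumes d: "d \<ge> 2" and p: "p \<ge> 1" and aI: "admissible d I" and j: "j \<noteq> k"
  shows "mpoly_deg_in (Qc d p k I) j = I j * d ^ (p - 1)"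
  unfolding Qc_deg[OF d aI]
proof (rule Max_eqI)
  show "finite (insert 0 ((\<lambda>l. mon d p k I l j) ` {..<p}))" by simp
  show "y \<le> I j * d ^ (p - 1)" if "y \<in> insert 0 ((\<lambda>l. mon d p k I l j) ` {..<p})" for y
  proof -
    from that consider "y = 0" | l where "l < p" "y = d ^ l * I j" using j unfolding mon_def by auto
    then show ?thesis
    proof cases
      case 2
      have "d ^ l \<le> d ^ (p - 1)" using 2 d by (intro pow_mono_lt) auto
      then show ?thesis using 2 by (simp add: mult.commute)
    qed simp
  qed
  show "I j * d ^ (p - 1) \<in> insert 0 ((\<lambda>l. mon d p k I l j) ` {..<p})"
    using j p unfolding mon_def by (intro insertI2 image_eqI[of _ _ "p - 1"]) (auto simp: mult.commute)
qed

lemma deg_k1: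
  fixes I :: "'n::finite \<Rightarrow> nat"
  assumes d: "d \<ge> 2" and p: "p \<ge> 1" and aI: "admissible d I" and ik: "I k \<le> d - 2"
  shows "mpoly_deg_in (Qc d p k I) k = (I k + 1) * d ^ (p - 1) - 1"
  unfolding Qc_deg[OF d aI]
proof (rule Max_eqI)
  show "finite (insert 0 ((\<lambda>l. mon d p k I l k) ` {..<p}))" by simp
  have ne: "I k \<noteq> d - 1" using ik d by simp
  show "y \<le> (I k + 1) * d ^ (p - 1) - 1" if "y \<in> insert 0 ((\<lambda>l. mon d p k I l k) ` {..<p})" for y
  proof -
    from that consider "y = 0" | l where "l < p" "y = ak d p (I k) l" unfolding mon_def by auto
    then show ?thesis
    proof cases
      case 2
      show ?thesis
      proof (cases "l < p - 1")
        case True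
        have "ak d p (I k) l + d ^ l * (d - I k) = d ^ (p - 1)" using ak_lt[OF True _ d] ik d by simp
        moreover have "d ^ l * (d - I k) \<ge> 1" using ik d by simp
        moreover have "(I k + 1) * d ^ (p - 1) \<ge> d ^ (p - 1)" by simp
        ultimately show ?thesis using 2 by linarith
      next
        case False
        then show ?thesis using 2 ne unfolding ak_def by simp
      qed
    qed simp
  qed
  show "(I k + 1) * d ^ (p - 1) - 1 \<in> insert 0 ((\<lambda>l. mon d p k I l k) ` {..<p})"
    using p ne unfolding mon_def ak_def by (intro insertI2 image_eqI[of _ _ "p - 1"]) auto
qed

lemma deg_k2:
  fixes I :: "'n::finite \<Rightarrow> nat"
  assumes d: "d \<ge> 2" and p: "p \<ge> 1" and aI: "admissible d I" and ik: "I k = d - 1"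
  shows "mpoly_deg_in (Qc d p k I) k = d ^ (p - 1) - 1"
  unfolding Qc_deg[OF d aI]
proof (rule Max_eqI)
  show "finite (insert 0 ((\<lambda>l. mon d p k I l k) ` {..<p}))" by simp
  show "y \<le> d ^ (p - 1) - 1" if "y \<in> insert 0 ((\<lambda>l. mon d p k I l k) ` {..<p})" for y
  proof -
    from that consider "y = 0" | l where "l < p" "y = ak d p (I k) l" unfolding mon_def by auto
    then show ?thesis
    proof cases
      case 2
      show ?thesis
      proof (cases "l < p - 1")
        case True
        have "ak d p (I k) l + d ^ l * (d - I k) = d ^ (p - 1)" using ak_lt[OF True, of "I k" d] ik d by simp
        moreover have "d ^ l * (d - I k) \<ge> 1" using ik d by simp
        ultimately show ?thesis using 2 by linarith
      next
        case False
        then show ?thesis using 2 ik unfolding ak_def by simp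
      qed
    qed simp
  qed
  show "d ^ (p - 1) - 1 \<in> insert 0 ((\<lambda>l. mon d p k I l k) ` {..<p})"
  proof (cases "p = 1")
    case True then show ?thesis by simp
  next
    case False
    then have "0 < p - 1" using p by simp
    then have "ak d p (I k) 0 = d ^ (p - 1) - 1" using ik d unfolding ak_def by simp
    then show ?thesis using p unfolding mon_def by (intro insertI2 image_eqI[of _ _ 0]) auto
  qed
qed

lemma no_prop:
  fixes I I' :: "'n::finite \<Rightarrow> nat"
  assumes d: "d \<ge> 2" and p: "p \<ge> 2" and aI: "admissible d I" and aI': "admissible d I'" and ne: "I \<noteq> I'"
  shows "no_proportional_monomials (Qc d p k I) (Qc d p k I')"
  unfolding no_proportional_monomials_def
proof (intro allI notI)
  fix e assume "Qc d p k I e \<noteq> 0 \<and> Qc d p k I' e \<noteq> 0"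
  then obtain l l' where "l < p" "l' < p" "e = mon d p k I l" "e = mon d p k I' l'"
    unfolding Qc_def by (auto split: if_splits)
  then show False using mon_eq[OF d p aI aI', of l l' k] ne by auto
qed



definition Ft :: "nat \<Rightarrow> 'n::finite \<Rightarrow> ('n \<Rightarrow> nat) \<Rightarrow> complex \<Rightarrow> complex^'n \<Rightarrow> complex^'n" where
  "Ft d k I t = (\<lambda>z. F0 d z + t *s Pmon k I z)"

lemma Ft_comp: "Ft d k I t z $ i = (z $ i) ^ d + (if i = k then t * (\<Prod>j\<in>UNIV. (z $ j) ^ (I j)) else 0)"
  unfolding Ft_def F0_def Pmon_def by simp

lemma iter_other: "j \<noteq> k \<Longrightarrow> ((Ft d k I t) ^^ m) z $ j = (z $ j) ^ (d ^ m)"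
  by (induction m) (auto simp: Ft_comp power_mult[symmetric] mult.commute)

lemma F0_iter: "((F0 d) ^^ m) z $ j = (z $ j) ^ (d ^ m)"
  by (induction m) (auto simp: F0_def power_mult[symmetric] mult.commute)

definition uu :: "nat \<Rightarrow> 'n::finite \<Rightarrow> ('n \<Rightarrow> nat) \<Rightarrow> complex^'n \<Rightarrow> nat \<Rightarrow> complex" where
  "uu d k I w0 l = (\<Prod>j\<in>UNIV - {k}. (w0 $ j) ^ (d ^ l * I j))"

lemma iter_k:
  assumes "\<forall>j. j \<noteq> k \<longrightarrow> z $ j = w0 $ j"
  shows "((Ft d k I t) ^^ m) z $ k = Phi d (I k) (uu d k I w0) m (t, z $ k)"
proof (induction m)
  case 0 then show ?case by simp
next
  case (Suc m)
  define v where "v = ((Ft d k I t) ^^ m) z"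
  have vj: "v $ j = (w0 $ j) ^ (d ^ m)" if "j \<noteq> k" for j
    unfolding v_def using iter_other[OF that] assms that by simp
  have "(\<Prod>j\<in>UNIV. (v $ j) ^ (I j)) = (v $ k) ^ (I k) * (\<Prod>j\<in>UNIV - {k}. (v $ j) ^ (I j))"
    by (rule prod.remove) auto
  also have "(\<Prod>j\<in>UNIV - {k}. (v $ j) ^ (I j)) = uu d k I w0 m"
    unfolding uu_def by (rule prod.cong) (auto simp: vj power_mult)
  finally have "(\<Prod>j\<in>UNIV. (v $ j) ^ (I j)) = (v $ k) ^ (I k) * uu d k I w0 m" .
  then show ?case using Suc unfolding v_def by (simp add: Ft_comp)
qed

lemma exps:
  fixes W :: complex
  assumes W: "W \<noteq> 0" and per: "W ^ (d ^ p) = W" and d: "d \<ge> 2" and p: "p \<ge> 1" and l: "l < p" and ik: "ik \<le> d - 1"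
  shows "W ^ (ak d p ik l + d ^ Suc l) = W ^ (d ^ l * ik + d ^ (p - 1))"
proof (cases "l < p - 1")
  case True
  have "ak d p ik l + d ^ l * (d - ik) = d ^ (p - 1)" using ak_lt[OF True, of ik d] ik d by simp
  moreover have "d ^ Suc l = d ^ l * ik + d ^ l * (d - ik)" using ik
    by (simp flip: add_mult_distrib2)
  ultimately have "ak d p ik l + d ^ Suc l = d ^ l * ik + d ^ (p - 1)" by linarith
  then show ?thesis by simp
next
  case False
  then have lp: "Suc l = p" "l = p - 1" using l by auto
  have dp: "d ^ p = d ^ (p - 1) * d" using p by (cases p) auto
  show ?thesis
  proof (cases "ik = d - 1")
    case True
    have ak0: "ak d p ik l = 0" using False True unfolding ak_def by simp
    have "d ^ (p - 1) * (d - 1) + d ^ (p - 1) = d ^ (p - 1) * (d - 1 + 1)"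
      by (simp add: algebra_simps)
    moreover have "d - 1 + 1 = d" using d by simp
    ultimately have "d ^ (p - 1) * (d - 1) + d ^ (p - 1) = d ^ p" using dp by simp
    then show ?thesis using True lp ak0 by (simp add: mult.commute)
  next
    case ne: False
    then have a: "ak d p ik l = (ik + 1) * d ^ (p - 1) - 1" using False unfolding ak_def by simp
    have "d ^ (p - 1) \<ge> 1" using d by simp
    then have pos: "(ik + 1) * d ^ (p - 1) \<ge> 1" by (metis add.commute le_add1 le_trans mult_Suc plus_1_eq_Suc)
    have "W ^ (ak d p ik l + d ^ Suc l) = W ^ ak d p ik l * W ^ (d ^ p)" using lp by (simp add: power_add)
    also have "\<dots> = W ^ (ak d p ik l + 1)" using per by simp
    also have "ak d p ik l + 1 = (ik + 1) * d ^ (p - 1)" using a pos by linarith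
    also have "\<dots> = d ^ l * ik + d ^ (p - 1)" using lp by (simp add: algebra_simps)
    finally show ?thesis .
  qed
qed

lemma prod_mon:
  fixes w0 :: "complex^'n::finite"
  shows "(\<Prod>j\<in>UNIV. (w0 $ j) ^ (mon d p k I l j)) = (w0 $ k) ^ (ak d p (I k) l) * uu d k I w0 l"
proof -
  have "(\<Prod>j\<in>UNIV. (w0 $ j) ^ (mon d p k I l j)) = (w0 $ k) ^ (mon d p k I l k) * (\<Prod>j\<in>UNIV - {k}. (w0 $ j) ^ (mon d p k I l j))"
    by (rule prod.remove) auto
  also have "(\<Prod>j\<in>UNIV - {k}. (w0 $ j) ^ (mon d p k I l j)) = uu d k I w0 l"
    unfolding uu_def by (rule prod.cong) (auto simp: mon_def)
  finally show ?thesis by (simp add: mon_def)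
qed

lemma value_eq:
  fixes w0 :: "complex^'n::finite"
  assumes d: "d \<ge> 2" and p: "p \<ge> 1" and aI: "admissible d I"
    and W: "w0 $ k \<noteq> 0" and per: "(w0 $ k) ^ (d ^ p) = w0 $ k"
  shows "of_nat d ^ (p - 1) * (of_nat (I k) - of_nat d)
      * (\<Sum>l<p. Wp (w0 $ k) d l ^ (I k) * uu d k I w0 l / Wp (w0 $ k) d (Suc l))
    = mpoly_eval (Qc d p k I) w0 / (w0 $ k) ^ (d ^ (p - 1))"
proof -
  define W where "W = w0 $ k"
  have "(\<Sum>l<p. Wp W d l ^ (I k) * uu d k I w0 l / Wp W d (Suc l))
      = (\<Sum>l<p. (\<Prod>j\<in>UNIV. (w0 $ j) ^ (mon d p k I l j)) / W ^ (d ^ (p - 1)))"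
  proof (rule sum.cong, simp)
    fix l assume "l \<in> {..<p}"
    then have l: "l < p" by simp
    have e: "W ^ (ak d p (I k) l + d ^ Suc l) = W ^ (d ^ l * I k + d ^ (p - 1))"
      using exps[OF _ _ d p l adm_le[OF aI]] W per unfolding W_def by simp
    have Wnz: "W \<noteq> 0" using W unfolding W_def .
    have "Wp W d l ^ (I k) * uu d k I w0 l / Wp W d (Suc l)
        = W ^ (d ^ l * I k) * uu d k I w0 l / W ^ (d ^ Suc l)"
      unfolding Wp_def by (simp add: power_mult)
    also have "\<dots> = W ^ (ak d p (I k) l) * uu d k I w0 l / W ^ (d ^ (p - 1))"
      using e Wnz by (simp add: power_add field_simps)
    also have "\<dots> = (\<Prod>j\<in>UNIV. (w0 $ j) ^ (mon d p k I l j)) / W ^ (d ^ (p - 1))"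
      unfolding prod_mon W_def ..
    finally show "Wp W d l ^ (I k) * uu d k I w0 l / Wp W d (Suc l)
        = (\<Prod>j\<in>UNIV. (w0 $ j) ^ (mon d p k I l j)) / W ^ (d ^ (p - 1))" .
  qed
  moreover have "(\<Sum>l<p. (\<Prod>j\<in>UNIV. (w0 $ j) ^ (mon d p k I l j)) / W ^ (d ^ (p - 1)))
     = (\<Sum>l<p. (\<Prod>j\<in>UNIV. (w0 $ j) ^ (mon d p k I l j))) / W ^ (d ^ (p - 1))"
    by (simp add: sum_divide_distrib)
  ultimately show ?thesis unfolding Qc_eval[OF d p aI] W_def[symmetric]
    by simp
qed

lemma deriv_main:
  fixes k :: "'n::finite" and I :: "'n \<Rightarrow> nat" and w0 :: "complex^'n" and w :: "complex \<Rightarrow> complex^'n"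
  assumes d: "d \<ge> 2" and p: "p \<ge> 1" and aI: "admissible d I"
    and per: "periodic_point (F0 d) p w0" and nz: "\<forall>j. w0 $ j \<noteq> 0"
    and w00: "w 0 = w0" and cw: "isCont w 0"
    and fx: "\<forall>\<^sub>F t in nhds 0. ((Ft d k I t) ^^ p) (w t) = w t"
  shows "((\<lambda>t. jac_diag ((Ft d k I t) ^^ p) k (w t)) has_field_derivative
           (mpoly_eval (Qc d p k I) w0 / (w0 $ k) ^ (d ^ (p - 1)))) (at 0)"
proof -
  have perw: "(w0 $ j) ^ (d ^ p) = w0 $ j" for j
    using per F0_iter[where d=d and m=p and z=w0 and j=j] unfolding periodic_point_def by simp
  have "d \<le> d ^ p" using d p by (simp add: self_le_power)
  then have D: "d ^ p \<ge> 2" using d by simp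
  have others: "eventually (\<lambda>t. w t $ j = w0 $ j) (nhds 0)" if j: "j \<noteq> k" for j
  proof (rule root_iso[where D = "d ^ p"])
    show "isCont (\<lambda>t. w t $ j) 0" using cw by simp
    show "w 0 $ j = w0 $ j" using w00 by simp
    show "w0 $ j \<noteq> 0" using nz by simp
    show "(w0 $ j) ^ (d ^ p) = w0 $ j" by (rule perw)
    show "2 \<le> d ^ p" by (rule D)
    show "\<forall>\<^sub>F t in nhds 0. (w t $ j) ^ (d ^ p) = w t $ j"
      using fx
    proof eventually_elim
      case (elim t)
      have "((Ft d k I t) ^^ p) (w t) $ j = (w t $ j) ^ (d ^ p)" by (rule iter_other[OF j])
      then show ?case using elim by simp
    qed
  qed
  have evall: "eventually (\<lambda>t. \<forall>j. j \<noteq> k \<longrightarrow> w t $ j = w0 $ j) (nhds 0)"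
  proof (rule eventually_all_finite)
    fix j
    show "eventually (\<lambda>t. j \<noteq> k \<longrightarrow> w t $ j = w0 $ j) (nhds 0)"
    proof (cases "j = k")
      case True then show ?thesis by simp
    next
      case False
      show ?thesis using others[OF False] by (rule eventually_mono) simp
    qed
  qed
  define u where "u = uu d k I w0"
  define x where "x = (\<lambda>t. w t $ k)"
  define W where "W = w0 $ k"
  have Wnz: "W \<noteq> 0" using nz unfolding W_def by simp
  have WpW: "Wp W d p = W" unfolding Wp_def W_def by (rule perw)
  have evfix: "eventually (\<lambda>t. Phi d (I k) u p (t, x t) = x t) (nhds 0)"
    using evall fx
  proof eventually_elim
    case (elim t)
    have "((Ft d k I t) ^^ p) (w t) $ k = Phi d (I k) u p (t, w t $ k)"
      unfolding u_def by (rule iter_k) (use elim(1) in auto)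
    then show ?case using elim(2) unfolding x_def by simp
  qed
  have evjac: "eventually (\<lambda>t. jac_diag ((Ft d k I t) ^^ p) k (w t) = Jac d (I k) u p (t, x t)) (nhds 0)"
    using evall
  proof eventually_elim
    case (elim t)
    have fe: "(\<lambda>s. ((Ft d k I t) ^^ p) (w t + (\<chi> i. if i = k then s else 0)) $ k)
        = (\<lambda>s. Phi d (I k) u p (t, s + x t))"
    proof
      fix s
      have "((Ft d k I t) ^^ p) (w t + (\<chi> i. if i = k then s else 0)) $ k
          = Phi d (I k) u p (t, (w t + (\<chi> i. if i = k then s else 0)) $ k)"
        unfolding u_def by (rule iter_k) (use elim in auto)
      then show "((Ft d k I t) ^^ p) (w t + (\<chi> i. if i = k then s else 0)) $ k = Phi d (I k) u p (t, s + x t)"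
        unfolding x_def by (simp add: add.commute)
    qed
    have "((\<lambda>s. Phi d (I k) u p (t, s + x t)) has_field_derivative Jac d (I k) u p (t, 0 + x t)) (at 0)"
      using DERIV_shift[THEN iffD1, OF Phi_deriv[of d "I k" u p t "0 + x t"]] by simp
    then have "deriv (\<lambda>s. Phi d (I k) u p (t, s + x t)) 0 = Jac d (I k) u p (t, x t)"
      by (simp add: DERIV_imp_deriv)
    then show ?case unfolding jac_diag_def fe .
  qed
  have cx: "isCont x 0" unfolding x_def using cw by simp
  have x0: "x 0 = W" unfolding x_def W_def using w00 by simp
  note FV1 = final_value(1)[OF Wnz d p WpW]
  note FV2 = final_value(2)[OF Wnz d p WpW, where ik="I k" and u=u]
  have DJ: "((\<lambda>t. Jac d (I k) u p (t, x t)) has_field_derivative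
      (of_nat d ^ (p - 1) * (of_nat (I k) - of_nat d) * (\<Sum>l<p. Wp W d l ^ (I k) * u l / Wp W d (Suc l)))) (at 0)"
    using jet_implicit[OF jet_Phi[OF Wnz d, of "I k" u p] jet_Jac[OF Wnz d, of "I k" u p] FV1 cx x0 evfix]
    unfolding FV2 .
  have VE: "of_nat d ^ (p - 1) * (of_nat (I k) - of_nat d) * (\<Sum>l<p. Wp W d l ^ (I k) * u l / Wp W d (Suc l))
      = mpoly_eval (Qc d p k I) w0 / (w0 $ k) ^ (d ^ (p - 1))"
    unfolding u_def W_def by (rule value_eq[OF d p aI]) (use nz perw in auto)
  show ?thesis
    using DERIV_cong_ev[OF refl evjac refl] DJ unfolding VE by simp
qed


theorem lemma4p2:
  fixes d p :: nat and k :: "'n::finite"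
  assumes "d \<ge> 2" and "p \<ge> 1"
  shows "\<exists>Q :: ('n \<Rightarrow> nat) \<Rightarrow> (('n \<Rightarrow> nat) \<Rightarrow> complex).
    (\<forall>I. admissible d I \<longrightarrow>
       is_mpoly (Q I)
     \<and> (\<forall>w0 :: complex^'n. \<forall>w :: complex \<Rightarrow> complex^'n.
          periodic_point (F0 d) p w0 \<and> (\<forall>j. w0 $ j \<noteq> 0)
          \<and> w 0 = w0 \<and> isCont w 0
          \<and> (\<forall>\<^sub>F t in nhds 0. ((\<lambda>z. F0 d z + t *s Pmon k I z) ^^ p) (w t) = w t)
          \<longrightarrow> ((\<lambda>t. jac_diag ((\<lambda>z. F0 d z + t *s Pmon k I z) ^^ p) k (w t))
                has_field_derivative (mpoly_eval (Q I) w0 / (w0 $ k) ^ (d ^ (p - 1)))) (at 0))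
     \<and> (\<forall>j. j \<noteq> k \<longrightarrow> mpoly_deg_in (Q I) j = I j * d ^ (p - 1))
     \<and> (I k \<le> d - 2 \<longrightarrow> mpoly_deg_in (Q I) k = (I k + 1) * d ^ (p - 1) - 1)
     \<and> (I k = d - 1 \<longrightarrow> mpoly_deg_in (Q I) k = d ^ (p - 1) - 1))
  \<and> (p \<ge> 2 \<longrightarrow> (\<forall>I I'. admissible d I \<and> admissible d I' \<and> I \<noteq> I' \<longrightarrow>
        no_proportional_monomials (Q I) (Q I')))"
proof -
  have d: "d \<ge> 2" and p: "p \<ge> 1" using assms by auto
  have D: "((\<lambda>t. jac_diag ((\<lambda>z. F0 d z + t *s Pmon k I z) ^^ p) k (w t))
                has_field_derivative (mpoly_eval (Qc d p k I) w0 / (w0 $ k) ^ (d ^ (p - 1)))) (at 0)"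
    if aI: "admissible d I" and H: "periodic_point (F0 d) p w0 \<and> (\<forall>j. w0 $ j \<noteq> 0)
          \<and> w 0 = w0 \<and> isCont w 0
          \<and> (\<forall>\<^sub>F t in nhds 0. ((\<lambda>z. F0 d z + t *s Pmon k I z) ^^ p) (w t) = w t)"
    for I and w0 :: "complex^'n" and w :: "complex \<Rightarrow> complex^'n"
  proof -
    have fx: "\<forall>\<^sub>F t in nhds 0. ((Ft d k I t) ^^ p) (w t) = w t" using H unfolding Ft_def by simp
    have "((\<lambda>t. jac_diag ((Ft d k I t) ^^ p) k (w t)) has_field_derivative
           (mpoly_eval (Qc d p k I) w0 / (w0 $ k) ^ (d ^ (p - 1)))) (at 0)"
      using deriv_main[OF d p aI _ _ _ _ fx] H by simp
    then show ?thesis unfolding Ft_def .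
  qed
  show ?thesis
    apply (rule exI[of _ "\<lambda>I. Qc d p k I"])
    apply (intro conjI allI impI)
    subgoal for I by (rule Qc_mpoly[OF d])
    subgoal for I w0 w by (rule D)
    subgoal for I j by (rule deg_other[OF d p])
    subgoal for I by (rule deg_k1[OF d p])
    subgoal for I by (rule deg_k2[OF d p])
    subgoal for I I' using no_prop[OF d, of p I I' k] by blast
    done
qed


end
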